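(* Let $x,y$ be positive integers and $z,w$ positive real numbers such that $w-z$ is a positive integer with $w-z\geq x$. Then $$\sum_{j=x}^{w-z}\binom{j}{y}\binom{w-j}{z}=\sum_{i=\max\{0,\,x+y+z-w\}}^{y} \binom{x}{i}\binom{w-x+1}{z+y-i+1}.$$
   Context: Binomial coefficients are generalized binomial coefficients: for real $a,b$, $\binom{a}{b}=\frac{\Gamma(a+1)}{\Gamma(b+1)\Gamma(a-b+1)}$, where $\Gamma$ is the Gamma function; in particular, if $b$ is a positive integer then $\binom{a}{b}=\frac{a(a-1)\cdots(a-b+1)}{b!}$. *)

theory Defs
  imports "HOL-Analysis.Analysis"
begin

text \<open>Generalized binomial coefficient for real arguments:
  binom(a,b) = Gamma(a+1) / (Gamma(b+1) Gamma(a-b+1)),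
  with the standard convention 1/Gamma = 0 at the poles (via rGamma).\<close>
definition rbinom :: "real \<Rightarrow> real \<Rightarrow> real" where
  "rbinom a b = Gamma (a + 1) * rGamma (b + 1) * rGamma (a - b + 1)"

end

theory Submission
  imports Defs "HOL-Computational_Algebra.Formal_Power_Series"
begin

lemma rbinom_gchoose:
  assumes "a - real k + 1 > 0" "b = a - real k"
  shows "rbinom a b = a gchoose k"
proof -
  have nz: "a - real k + 1 \<notin> \<int>\<^sub>\<le>\<^sub>0" using assms(1) nonpos_Ints_nonpos by fastforce
  have p: "pochhammer (a - real k + 1) k = Gamma (a + 1) / Gamma (a - real k + 1)"
    using pochhammer_Gamma[OF nz, of k] by simp
  have g0: "Gamma (a - real k + 1) > 0" using assms(1) by simp
  have rk: "rGamma (real k + 1) = inverse (fact k)"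
    using Gamma_fact[of k] by (simp add: rGamma_inverse_Gamma add.commute)
  have "rbinom a b = Gamma (a + 1) * rGamma (a - real k + 1) * rGamma (real k + 1)"
    unfolding rbinom_def assms(2) by simp
  also have "\<dots> = pochhammer (a - real k + 1) k / fact k"
    using g0 unfolding rk p by (simp add: rGamma_inverse_Gamma field_simps)
  also have "\<dots> = a gchoose k" by (simp add: gbinomial_pochhammer')
  finally show ?thesis .
qed

lemma rbinom_nat: "rbinom (real j) (real y) = real (j choose y)"
proof (cases "y \<le> j")
  case True
  have "rbinom (real j) (real y) = real j gchoose (j - y)"
    by (rule rbinom_gchoose) (use True in auto)
  also have "\<dots> = real (j choose (j - y))" by (simp add: binomial_gbinomial)
  also have "\<dots> = real (j choose y)" using True binomial_symmetric by metis
  finally show ?thesis .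
next
  case False
  have "real j - real y + 1 = of_int (int j - int y + 1)" by simp
  then have "rGamma (real j - real y + 1) = 0" using False
    by (simp only: rGamma_of_int) simp
  then show ?thesis using False unfolding rbinom_def by simp
qed

lemma inner:
  fixes z :: real
  assumes "r \<le> m"
  shows "(\<Sum>t\<le>m. real (t choose r) * ((z + real (m - t)) gchoose (m - t)))
         = (z + real m + 1) gchoose (m - r)"
proof -
  define p where "p = m - r"
  define f where "f t = real (t choose r) * ((z + real (m - t)) gchoose (m - t))" for t
  have m: "m = r + p" using assms p_def by simp
  have "{..m} = {..<r} \<union> {r..m}" using assms by auto
  then have "(\<Sum>t\<le>m. f t) = (\<Sum>t\<in>{..<r}. f t) + (\<Sum>t\<in>{r..m}. f t)"
    by (simp add: sum.union_disjoint ivl_disj_int)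
  also have "(\<Sum>t\<in>{..<r}. f t) = 0" by (intro sum.neutral) (simp add: f_def binomial_eq_0)
  also have "(\<Sum>t\<in>{r..m}. f t) = (\<Sum>u\<in>{0..p}. f (u + r))"
    using sum.shift_bounds_cl_nat_ivl[of f 0 r p] m by (simp add: add.commute)
  also have "\<dots> = (\<Sum>u\<in>{0..p}. (-1)^p * (((- real r - 1) gchoose u) * ((- z - 1) gchoose (p - u))))"
  proof (rule sum.cong[OF refl])
    fix u assume u: "u \<in> {0..p}"
    have a: "real ((u + r) choose r) = (-1)^u * ((- real r - 1) gchoose u)"
    proof -
      have "real ((u + r) choose r) = real ((u + r) choose u)"
        using binomial_symmetric[of u "u + r"] by simp
      also have "\<dots> = real (u + r) gchoose u" by (simp add: binomial_gbinomial)
      also have "\<dots> = (-1)^u * ((- real r - 1) gchoose u)"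
        using gbinomial_negated_upper[of "- real r - 1" u] by (simp add: algebra_simps)
      finally show ?thesis .
    qed
    have b: "(z + real (p - u)) gchoose (p - u) = (-1)^(p - u) * ((- z - 1) gchoose (p - u))"
      using gbinomial_negated_upper[of "z + real (p - u)" "p - u"] by (simp add: algebra_simps)
    have c: "m - (u + r) = p - u" using m by simp
    have d: "(-1::real)^u * (-1)^(p-u) = (-1)^p" using u by (simp flip: power_add)
    show "f (u + r) = (-1)^p * (((- real r - 1) gchoose u) * ((- z - 1) gchoose (p - u)))"
      unfolding f_def a c b by (simp flip: d add: algebra_simps)
  qed
  also have "\<dots> = (-1)^p * ((- real r - 1 + (- z - 1)) gchoose p)"
    by (simp add: sum_distrib_left[symmetric] gbinomial_Vandermonde)
  also have "\<dots> = (z + real m + 1) gchoose (m - r)"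
  proof -
    have e: "real p - (- real r - 1 + (- z - 1)) - 1 = z + real m + 1" using m by simp
    have s: "(-1::real)^p * (-1)^p = 1" by (simp flip: power_mult_distrib)
    have "(-1)^p * ((- real r - 1 + (- z - 1)) gchoose p)
        = ((-1::real)^p * (-1)^p) * ((z + real m + 1) gchoose p)"
      using gbinomial_negated_upper[of "- real r - 1 + (- z - 1)" p] unfolding e
      by (simp only: mult.assoc)
    then show ?thesis unfolding s p_def by simp
  qed
  finally show ?thesis by (simp add: f_def)
qed


lemma inner2:
  fixes z :: real
  shows "(\<Sum>t\<le>m. real (t choose r) * ((z + real (m - t)) gchoose (m - t)))
         = (if r \<le> m then (z + real m + 1) gchoose (m - r) else 0)"
proof (cases "r \<le> m")
  case True then show ?thesis using inner by simp
next
  case False then show ?thesis by (intro trans[OF sum.neutral]) (auto simp: binomial_eq_0)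
qed

lemma core:
  fixes z :: real
  assumes "x \<le> n"
  shows "(\<Sum>j=x..n. real (j choose y) * ((z + real (n-j)) gchoose (n-j)))
       = (\<Sum>i=x+y-n..y. real (x choose i) * ((z + real (n-x) + 1) gchoose (n + i - (x+y))))"
proof -
  define m where "m = n - x"
  define g where "g s = (z + real s) gchoose s" for s
  have n: "n = m + x" using assms m_def by simp
  have "(\<Sum>j=x..n. real (j choose y) * g (n-j)) = (\<Sum>t=0..m. real ((t + x) choose y) * g (n - (t + x)))"
    using sum.shift_bounds_cl_nat_ivl[of "\<lambda>j. real (j choose y) * g (n-j)" 0 x m] n by simp
  also have "\<dots> = (\<Sum>t\<le>m. \<Sum>i\<le>y. real (x choose i) * (real (t choose (y - i)) * g (m - t)))"
  proof (rule sum.cong)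
    fix t assume "t \<in> {..m}"
    have "real ((t + x) choose y) = (\<Sum>i\<le>y. real (x choose i) * real (t choose (y - i)))"
      using vandermonde[where r=y and m=x and n=t] by (simp add: add.commute flip: of_nat_sum of_nat_mult)
    then show "real ((t + x) choose y) * g (n - (t + x)) = (\<Sum>i\<le>y. real (x choose i) * (real (t choose (y - i)) * g (m - t)))"
      by (simp add: n sum_distrib_right mult.assoc)
  qed (simp add: atLeast0AtMost)
  also have "\<dots> = (\<Sum>i\<le>y. real (x choose i) * (\<Sum>t\<le>m. real (t choose (y - i)) * g (m - t)))"
    by (subst sum.swap) (simp add: sum_distrib_left)
  also have "\<dots> = (\<Sum>i\<le>y. if y - i \<le> m then real (x choose i) * ((z + real m + 1) gchoose (m - (y - i))) else 0)"
    unfolding g_def inner2 by (intro sum.cong) auto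
  also have "\<dots> = (\<Sum>i\<in>{i\<in>{..y}. y - i \<le> m}. real (x choose i) * ((z + real m + 1) gchoose (m - (y - i))))"
    by (simp only: sum.inter_filter[OF finite_atMost])
  also have "{i\<in>{..y}. y - i \<le> m} = {x+y-n..y}" using n by auto
  also have "(\<Sum>i\<in>{x+y-n..y}. real (x choose i) * ((z + real m + 1) gchoose (m - (y - i))))
     = (\<Sum>i=x+y-n..y. real (x choose i) * ((z + real (n-x) + 1) gchoose (n + i - (x+y))))"
  proof (intro sum.cong refl)
    fix i assume i: "i \<in> {x+y-n..y}"
    have "m - (y - i) = n + i - (x+y)" "real m = real (n - x)" using i n by auto
    then show "real (x choose i) * ((z + real m + 1) gchoose (m - (y - i)))
      = real (x choose i) * ((z + real (n-x) + 1) gchoose (n + i - (x+y)))" by simp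
  qed
  finally show ?thesis by (simp add: g_def)
qed


theorem lemma2p3:
  fixes x y :: nat and z w :: real
  assumes "x > 0" and "y > 0" and "z > 0" and "w > 0"
    and "w - z \<in> \<int>" and "w - z > 0" and "w - z \<ge> real x"
  shows "(\<Sum>j\<in>{int x..\<lfloor>w - z\<rfloor>}. rbinom (of_int j) (real y) * rbinom (w - of_int j) z)
       = (\<Sum>i\<in>{max 0 \<lfloor>real x + real y + z - w\<rfloor>..int y}.
            rbinom (real x) (of_int i) * rbinom (w - real x + 1) (z + real y - of_int i + 1))"
proof -
  obtain k where k: "w - z = of_int k" using assms(5) Ints_cases by blast
  define n where "n = nat k"
  have wn: "w = z + real n" using k assms(6) n_def by simp
  have xn: "x \<le> n" using assms(7) wn by simp
  have f1: "\<lfloor>w - z\<rfloor> = int n" using wn by simp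
  have f2: "max 0 \<lfloor>real x + real y + z - w\<rfloor> = int (x + y - n)"
  proof -
    have "real x + real y + z - w = of_int (int x + int y - int n)" using wn by simp
    then have "\<lfloor>real x + real y + z - w\<rfloor> = int x + int y - int n" by (simp only: floor_of_int)
    then show ?thesis by auto
  qed
  have s1: "{int x..int n} = int ` {x..n}" by (simp add: image_int_atLeastAtMost)
  have s2: "{int (x + y - n)..int y} = int ` {x + y - n..y}" by (simp add: image_int_atLeastAtMost)
  have "(\<Sum>j\<in>{int x..\<lfloor>w - z\<rfloor>}. rbinom (of_int j) (real y) * rbinom (w - of_int j) z)
      = (\<Sum>j=x..n. rbinom (real j) (real y) * rbinom (w - real j) z)"
    unfolding f1 s1 by (subst sum.reindex) (auto simp: inj_on_def)
  also have "\<dots> = (\<Sum>j=x..n. real (j choose y) * ((z + real (n-j)) gchoose (n-j)))"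
  proof (intro sum.cong refl)
    fix j assume j: "j \<in> {x..n}"
    have e: "w - real j = z + real (n - j)" using j wn by auto
    have "rbinom (w - real j) z = (z + real (n - j)) gchoose (n - j)"
      unfolding e by (rule rbinom_gchoose) (use j wn assms(3) in auto)
    then show "rbinom (real j) (real y) * rbinom (w - real j) z
        = real (j choose y) * ((z + real (n-j)) gchoose (n-j))" by (simp add: rbinom_nat)
  qed
  also have "\<dots> = (\<Sum>i=x+y-n..y. real (x choose i) * ((z + real (n-x) + 1) gchoose (n + i - (x+y))))"
    by (rule core[OF xn])
  also have "\<dots> = (\<Sum>i=x+y-n..y. rbinom (real x) (real i) * rbinom (w - real x + 1) (z + real y - real i + 1))"
  proof (intro sum.cong refl)
    fix i assume i: "i \<in> {x+y-n..y}"
    have e: "w - real x + 1 = z + real (n - x) + 1" using xn wn by auto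
    have "rbinom (w - real x + 1) (z + real y - real i + 1) = (z + real (n - x) + 1) gchoose (n + i - (x+y))"
      unfolding e by (rule rbinom_gchoose) (use i wn assms(3) xn in \<open>auto simp: of_nat_diff\<close>)
    then show "real (x choose i) * ((z + real (n-x) + 1) gchoose (n + i - (x+y)))
       = rbinom (real x) (real i) * rbinom (w - real x + 1) (z + real y - real i + 1)"
      by (simp add: rbinom_nat)
  qed
  also have "\<dots> = (\<Sum>i\<in>{max 0 \<lfloor>real x + real y + z - w\<rfloor>..int y}.
            rbinom (real x) (of_int i) * rbinom (w - real x + 1) (z + real y - of_int i + 1))"
    unfolding f2 s2 by (subst sum.reindex) (auto simp: inj_on_def)
  finally show ?thesis .
qed

end
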